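(* Let $g_1:\mathbb{R}^d\to[0,\infty)$ be differentiable almost everywhere, let $U$ be a $d\times d$ orthogonal matrix, and define $g_2(\bm z)=g_1(U\bm z)$. Assume that for each of $g_1,g_2$ the optimal drift equation $\nabla g(\bm z)/g(\bm z)=\bm z$ has a unique solution and that the Laplace importance sampling integrands $g_1^{\mathrm I},g_2^{\mathrm I}$ are well defined. Then there is an orthogonal matrix $V$ with $g_2^{\mathrm I}(\bm z)=g_1^{\mathrm I}(V\bm z)$ for all $\bm z$; consequently $g_1$ and $g_2$ have the same IS-active subspaces, and their analytic expressions in the $d$-dimensional IS-active subspace coincide: $g_1^{\mathrm{IA}}(\bm z)=g_2^{\mathrm{IA}}(\bm z)$.
   Context: Laplace importance sampling: for a nonnegative $g$, let $F(\bm z)=\ln g(\bm z)$, let $\bm\mu^*$ be the (assumed unique) solution of $\nabla g(\bm z)/g(\bm z)=\bm z$, let $\Gamma^*=\big(I_d-\nabla^2F(\bm\mu^* )\big)^{-1}$ (assumed to exist and be positive definite, with $F$ twice differentiable at $\bm\mu^*$), and let $L^*$ satisfy $L^*{L^*}^T=\Gamma^*$ (e.g. the Cholesky factor). The IS integrand is $g^{\mathrm I}(\bm z)=g(L^*\bm z+\bm\mu^* )\sqrt{\det\Gamma^*}\exp\!\big(\tfrac12\bm z^T\bm z-\tfrac12(L^*\bm z+\bm\mu^* )^T(L^*\bm z+\bm\mu^* )\big)$, so that $\mathbb{E}g(\bm Z)=\mathbb{E}g^{\mathrm I}(\bm Z)$ for $\bm Z\sim N(\bm 0,I_d)$. For an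 a.e. differentiable $h$, the gradient information matrix is $C=\mathbb{E}\big(\nabla h(\bm Z)\nabla h(\bm Z)^T\big)=Q\Lambda Q^T$ (eigendecomposition, $Q$ orthogonal, eigenvalues descending); the $r$-dimensional active subspace of $h$ is spanned by the first $r$ columns of $Q$. The IS-active subspaces of $g$ are the active subspaces of $g^{\mathrm I}$, and $g^{\mathrm{IA}}(\bm z):=g^{\mathrm I}(Q\bm z)$ with $Q$ the eigenvector matrix of the gradient information matrix of $g^{\mathrm I}$. Two functions related by $h_2(\bm z)=h_1(V\bm z)$, $V$ orthogonal, are said to have the same active subspaces when, identifying their coordinates as coordinates of the same vector in orthonormal bases related by $V$, the $r$-dimensional active subspaces coincide for every $r$, with eigenvector matrices chosen correspondingly ($Q_2=V^TQ_1$) in case of repeated eigenvalues. It is assumed the relevant gradient information matrices are finite. *)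

theory Defs
  imports "HOL-Analysis.Analysis"
begin

text \<open>Dimension d is the cardinality of the finite index type 'd; the index type carries
  a (well-)order so that "the first r columns" / "descending eigenvalues" make sense.\<close>

definition grad :: "(real^'d \<Rightarrow> real) \<Rightarrow> real^'d \<Rightarrow> real^'d" where
  "grad h z = (\<chi> i. frechet_derivative h (at z) (axis i 1))"

definition hess :: "(real^'d \<Rightarrow> real) \<Rightarrow> real^'d \<Rightarrow> real^'d^'d" where
  "hess F z = matrix (frechet_derivative (grad F) (at z))"

definition twice_differentiable_at :: "(real^'d \<Rightarrow> real) \<Rightarrow> real^'d \<Rightarrow> bool" where
  "twice_differentiable_at F mu \<longleftrightarrow>
     (\<forall>\<^sub>F z in nhds mu. F differentiable (at z)) \<and> grad F differentiable (at mu)"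

definition opt_drift :: "(real^'d \<Rightarrow> real) \<Rightarrow> real^'d \<Rightarrow> bool" where
  "opt_drift g mu \<longleftrightarrow> g mu \<noteq> 0 \<and> g differentiable (at mu) \<and> (1 / g mu) *\<^sub>R grad g mu = mu"

definition pos_def :: "real^'d^'d \<Rightarrow> bool" where
  "pos_def A \<longleftrightarrow> transpose A = A \<and> (\<forall>v. v \<noteq> 0 \<longrightarrow> v \<bullet> (A *v v) > 0)"

definition Gamma_star :: "(real^'d \<Rightarrow> real) \<Rightarrow> real^'d \<Rightarrow> real^'d^'d" where
  "Gamma_star g mu = matrix_inv (mat 1 - hess (\<lambda>z. ln (g z)) mu)"

definition laplace_IS_welldef :: "(real^'d \<Rightarrow> real) \<Rightarrow> real^'d \<Rightarrow> bool" where
  "laplace_IS_welldef g mu \<longleftrightarrow>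
     (\<forall>\<^sub>F z in nhds mu. g z > 0) \<and>
     twice_differentiable_at (\<lambda>z. ln (g z)) mu \<and>
     invertible (mat 1 - hess (\<lambda>z. ln (g z)) mu) \<and>
     pos_def (Gamma_star g mu)"

definition gI :: "(real^'d \<Rightarrow> real) \<Rightarrow> real^'d \<Rightarrow> real^'d^'d \<Rightarrow> real^'d \<Rightarrow> real" where
  "gI g mu L z = g (L *v z + mu) * sqrt (det (Gamma_star g mu)) *
      exp (1/2 * (z \<bullet> z) - 1/2 * ((L *v z + mu) \<bullet> (L *v z + mu)))"

definition std_normal_density :: "real^'d \<Rightarrow> real" where
  "std_normal_density z = (2 * pi) powr (- real CARD('d) / 2) * exp (- (z \<bullet> z) / 2)"

definition grad_info_matrix :: "(real^'d \<Rightarrow> real) \<Rightarrow> real^'d^'d" where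
  "grad_info_matrix h = (\<chi> i j. integral\<^sup>L lborel
       (\<lambda>z. grad h z $ i * grad h z $ j * std_normal_density z))"

definition grad_info_finite :: "(real^'d \<Rightarrow> real) \<Rightarrow> bool" where
  "grad_info_finite h \<longleftrightarrow> (\<forall>i j. integrable lborel
       (\<lambda>z. grad h z $ i * grad h z $ j * std_normal_density z))"

definition eigen_decomp :: "real^('d::{finite,wellorder})^('d::{finite,wellorder}) \<Rightarrow> real^('d::{finite,wellorder})^('d::{finite,wellorder}) \<Rightarrow> ('d::{finite,wellorder} \<Rightarrow> real) \<Rightarrow> bool" where
  "eigen_decomp C Q lam \<longleftrightarrow> orthogonal_matrix Q \<and>
     C = Q ** (\<chi> i j. if i = j then lam i else 0) ** transpose Q \<and>
     (\<forall>i j. i \<le> j \<longrightarrow> lam j \<le> lam i)"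

definition active_subspace :: "real^('d::{finite,wellorder})^('d::{finite,wellorder}) \<Rightarrow> nat \<Rightarrow> (real^('d::{finite,wellorder})) set" where
  "active_subspace Q r = span {column i Q | i. card {j. j < i} < r}"

end

theory Submission
  imports Defs
begin


lemma matrix_inv_works:
  fixes A :: "real^'n^'n"
  assumes "invertible A"
  shows "A ** matrix_inv A = mat 1" "matrix_inv A ** A = mat 1"
proof -
  have "\<exists>A'. A ** A' = mat 1 \<and> A' ** A = mat 1" using assms by (simp add: invertible_def)
  then have "A ** matrix_inv A = mat 1 \<and> matrix_inv A ** A = mat 1"
    unfolding matrix_inv_def by (rule someI_ex)
  then show "A ** matrix_inv A = mat 1" "matrix_inv A ** A = mat 1" by auto
qed

lemma matrix_inv_eq:
  fixes A B :: "real^'n^'n"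
  assumes "A ** B = mat 1" "B ** A = mat 1"
  shows "matrix_inv A = B"
proof -
  have inv: "invertible A" using assms by (auto simp: invertible_def)
  have "B = B ** (A ** matrix_inv A)" using matrix_inv_works[OF inv] by simp
  also have "\<dots> = (B ** A) ** matrix_inv A" by (simp add: matrix_mul_assoc)
  also have "\<dots> = matrix_inv A" using assms by simp
  finally show ?thesis by simp
qed

lemma linear_grad:
  fixes D :: "real^'n \<Rightarrow> real"
  assumes "linear D"
  shows "D v = (\<chi> i. D (axis i 1)) \<bullet> v"
proof -
  have "D v = D (\<Sum>i\<in>UNIV. v $ i *s axis i 1)"
    by (simp only: basis_expansion)
  also have "\<dots> = (\<Sum>i\<in>UNIV. v $ i * D (axis i 1))"
    using assms by (simp add: linear_sum linear_scale scalar_mult_eq_scaleR)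
  also have "\<dots> = (\<chi> i. D (axis i 1)) \<bullet> v"
    by (simp add: inner_vec_def mult.commute)
  finally show ?thesis .
qed

lemma mv_axis: "((A::real^'n^'m) *v axis i 1) $ j = A $ j $ i"
  by (simp add: matrix_vector_mult_basis column_def)

lemma inner_mv_axis: "(d::real^'n) \<bullet> ((A::real^'n^'n) *v axis i 1) = (transpose A *v d) $ i"
  unfolding inner_vec_def mv_axis by (simp add: matrix_vector_mult_def transpose_def mult.commute)

lemma grad_compose_linear:
  fixes f :: "real^'n \<Rightarrow> real" and A :: "real^'n^'n"
  assumes "f differentiable (at (A *v z))"
  shows "grad (\<lambda>z. f (A *v z)) z = transpose A *v grad f (A *v z)"
proof -
  obtain D where D: "(f has_derivative D) (at (A *v z))"
    using assms by (auto simp: differentiable_def)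
  have lin: "linear D" using D has_derivative_linear by blast
  have "((\<lambda>z. f (A *v z)) has_derivative (\<lambda>v. D (A *v v))) (at z)"
  proof -
    have l: "((\<lambda>z. A *v z) has_derivative (\<lambda>v. A *v v)) (at z)"
      by (simp add: matrix_vector_mul_linear linear_imp_has_derivative)
    show ?thesis using has_derivative_compose[OF l D] by simp
  qed
  then have fd: "frechet_derivative (\<lambda>z. f (A *v z)) (at z) = (\<lambda>v. D (A *v v))"
    by (rule frechet_derivative_at[symmetric])
  have fd2: "frechet_derivative f (at (A *v z)) = D"
    by (rule frechet_derivative_at[OF D, symmetric])
  show ?thesis
    unfolding grad_def fd fd2
  proof (rule vec_eq_iff[THEN iffD2], rule allI)
    fix i
    have "D (A *v axis i 1) = (\<chi> i. D (axis i 1)) \<bullet> (A *v axis i 1)"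
      by (rule linear_grad[OF lin])
    also have "\<dots> = (transpose A *v (\<chi> i. D (axis i 1))) $ i"
      by (rule inner_mv_axis)
    finally show "(\<chi> i. D (A *v axis i 1)) $ i = (transpose A *v (\<chi> i. D (axis i 1))) $ i"
      by simp
  qed
qed




lemma mv_borel: "(\<lambda>x. (V::real^'n^'n) *v x) \<in> borel_measurable borel"
  by (intro borel_measurable_continuous_onI linear_continuous_on matrix_vector_mul_bounded_linear)

lemma distr_orth:
  fixes V :: "real^('n::{finite,wellorder})^('n::{finite,wellorder})"
  assumes V: "orthogonal_matrix V"
  shows "distr lborel borel (\<lambda>x. V *v x) = lborel"
proof (rule lborel_eqI[symmetric])
  fix l u :: "real^('n::{finite,wellorder})"
  assume le: "\<And>b. b \<in> Basis \<Longrightarrow> l \<bullet> b \<le> u \<bullet> b"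
  have VV: "transpose V ** V = mat 1" "V ** transpose V = mat 1"
    using V by (auto simp: orthogonal_matrix_def)
  have pre: "(\<lambda>x. V *v x) -` box l u = (\<lambda>x. transpose V *v x) ` box l u"
  proof (intro set_eqI iffI)
    fix x assume "x \<in> (\<lambda>x. V *v x) -` box l u"
    then have "V *v x \<in> box l u" by simp
    moreover have "x = transpose V *v (V *v x)" by (simp add: matrix_vector_mul_assoc VV)
    ultimately show "x \<in> (\<lambda>x. transpose V *v x) ` box l u" by blast
  next
    fix x assume "x \<in> (\<lambda>x. transpose V *v x) ` box l u"
    then obtain y where y: "y \<in> box l u" "x = transpose V *v y" by blast
    have "V *v x = y" unfolding y(2) by (simp only: matrix_vector_mul_assoc VV matrix_vector_mul_lid)
    then show "x \<in> (\<lambda>x. V *v x) -` box l u" using y(1) by simp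
  qed
  have ot: "orthogonal_transformation (\<lambda>x. transpose V *v x)"
    unfolding orthogonal_transformation_matrix matrix_of_matrix_vector_mul
    using V matrix_vector_mul_linear[of "transpose V"] orthogonal_matrix_transpose[of V] by blast
  have bl: "box l u \<in> lmeasurable" by simp
  have Sb: "(\<lambda>x. V *v x) -` box l u \<in> sets borel"
    using mv_borel[of V] by (simp add: measurable_sets_borel)
  have "emeasure (distr lborel borel (\<lambda>x. V *v x)) (box l u)
        = emeasure lborel ((\<lambda>x. V *v x) -` box l u)"
    using mv_borel[of V] by (simp add: emeasure_distr)
  also have "\<dots> = emeasure lebesgue ((\<lambda>x. V *v x) -` box l u)"
    using Sb by simp
  also have "\<dots> = emeasure lebesgue ((\<lambda>x. transpose V *v x) ` box l u)"
    by (simp only: pre)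
  also have "\<dots> = measure lebesgue ((\<lambda>x. transpose V *v x) ` box l u)"
    using measurable_orthogonal_image[OF ot bl] by (simp add: emeasure_eq_measure2)
  also have "\<dots> = measure lebesgue (box l u)"
    using measure_orthogonal_image[OF ot bl] by simp
  also have "\<dots> = measure lborel (box l u)" by simp
  also have "\<dots> = (\<Prod>b\<in>Basis. (u - l) \<bullet> b)"
    using le by simp
  finally show "emeasure (distr lborel borel (\<lambda>x. V *v x)) (box l u) = (\<Prod>b\<in>Basis. (u - l) \<bullet> b)" .
qed simp

lemma AE_affine:
  fixes A :: "real^('n::{finite,wellorder})^('n::{finite,wellorder})"
  assumes A: "invertible A" and P: "AE x in lborel. P x"
  shows "AE z in lborel. P (A *v z + b)"
proof -
  obtain N where N: "{x \<in> space lborel. \<not> P x} \<subseteq> N" "emeasure lborel N = 0" "N \<in> sets lborel"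
    using P by (rule AE_E)
  have "N \<in> null_sets lborel" using N by auto
  then have "N \<in> null_sets lebesgue" by (rule null_sets_completionI)
  then have negN: "negligible N" by (simp add: negligible_iff_null_sets)
  define T where "T = (\<lambda>x. matrix_inv A *v (x - b))"
  have d1: "(\<lambda>x. x - b) differentiable_on N" by (intro derivative_intros)
  have d2: "(\<lambda>y. matrix_inv A *v y) differentiable_on ((\<lambda>x. x - b) ` N)"
    by (rule bounded_linear_imp_differentiable_on[OF matrix_vector_mul_bounded_linear])
  have "T differentiable_on N"
    using differentiable_on_compose[OF d1 d2] by (simp add: T_def o_def)
  then have "negligible (T ` N)"
    by (intro negligible_differentiable_image_negligible[OF _ negN]) auto
  then have "T ` N \<in> null_sets lebesgue" by (simp add: negligible_iff_null_sets)
  moreover have "{z \<in> space lebesgue. \<not> P (A *v z + b)} \<subseteq> T ` N"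
  proof
    fix z assume "z \<in> {z \<in> space lebesgue. \<not> P (A *v z + b)}"
    then have "A *v z + b \<in> N" using N(1) by auto
    moreover have "T (A *v z + b) = z"
      unfolding T_def using A
      by (simp add: matrix_vector_mul_assoc matrix_inv_works)
    ultimately show "z \<in> T ` N" by (metis image_eqI)
  qed
  ultimately have "AE z in lebesgue. P (A *v z + b)" by (rule AE_I')
  then show ?thesis by (simp add: AE_completion_iff)
qed




lemma eventually_nhds_linear:
  fixes U :: "real^'n^'n"
  assumes "eventually P (nhds (U *v mu))"
  shows "eventually (\<lambda>z. P (U *v z)) (nhds mu)"
proof -
  obtain S where S: "open S" "U *v mu \<in> S" "\<forall>x\<in>S. P x"
    using assms unfolding eventually_nhds by blast
  have "open ((\<lambda>z. U *v z) -` S)"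
    by (rule continuous_open_vimage[OF S(1)])
       (rule linear_continuous_at[OF matrix_vector_mul_bounded_linear])
  then show ?thesis unfolding eventually_nhds using S by (intro exI[of _ "(\<lambda>z. U *v z) -` S"]) auto
qed

lemma differentiable_compose_linear:
  fixes f :: "real^'n \<Rightarrow> real" and A :: "real^'n^'n"
  assumes "f differentiable (at (A *v z))"
  shows "(\<lambda>z. f (A *v z)) differentiable (at z)"
proof -
  obtain D where D: "(f has_derivative D) (at (A *v z))"
    using assms by (auto simp: differentiable_def)
  have l: "((\<lambda>z. A *v z) has_derivative (\<lambda>v. A *v v)) (at z)"
    by (simp add: matrix_vector_mul_linear linear_imp_has_derivative)
  show ?thesis using has_derivative_compose[OF l D] by (auto simp: differentiable_def)
qed

lemma hess_compose_linear:
  fixes F :: "real^'n \<Rightarrow> real" and U :: "real^'n^'n"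
  assumes tw: "twice_differentiable_at F (U *v mu)"
  shows "hess (\<lambda>z. F (U *v z)) mu = transpose U ** hess F (U *v mu) ** U"
proof -
  have ev1: "\<forall>\<^sub>F z in nhds (U *v mu). F differentiable (at z)"
    and gd: "grad F differentiable (at (U *v mu))"
    using tw by (auto simp: twice_differentiable_at_def)
  obtain D where D: "(grad F has_derivative D) (at (U *v mu))"
    using gd by (auto simp: differentiable_def)
  have linD: "linear D" using D has_derivative_linear by blast
  have ev2: "\<forall>\<^sub>F z in nhds mu. grad (\<lambda>z. F (U *v z)) z = transpose U *v grad F (U *v z)"
    using eventually_nhds_linear[OF ev1] by (rule eventually_mono) (rule grad_compose_linear)
  then obtain S where S: "open S" "mu \<in> S" "\<forall>x\<in>S. grad (\<lambda>z. F (U *v z)) x = transpose U *v grad F (U *v x)"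
    unfolding eventually_nhds by blast
  have l: "((\<lambda>z. U *v z) has_derivative (\<lambda>v. U *v v)) (at mu)"
    by (simp add: matrix_vector_mul_linear linear_imp_has_derivative)
  have c1: "((\<lambda>z. grad F (U *v z)) has_derivative (\<lambda>v. D (U *v v))) (at mu)"
    using has_derivative_compose[OF l D] by simp
  have c2: "((\<lambda>z. transpose U *v grad F (U *v z)) has_derivative (\<lambda>v. transpose U *v D (U *v v))) (at mu)"
    by (rule bounded_linear.has_derivative[OF matrix_vector_mul_bounded_linear c1])
  have c3: "(grad (\<lambda>z. F (U *v z)) has_derivative (\<lambda>v. transpose U *v D (U *v v))) (at mu)"
    by (rule has_derivative_transform_within_open[OF c2 S(1) S(2)]) (use S(3) in auto)
  have fd: "frechet_derivative (grad (\<lambda>z. F (U *v z))) (at mu) = (\<lambda>v. transpose U *v D (U *v v))"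
    by (rule frechet_derivative_at[OF c3, symmetric])
  have fd2: "frechet_derivative (grad F) (at (U *v mu)) = D"
    by (rule frechet_derivative_at[OF D, symmetric])
  have eq: "(\<lambda>v. transpose U *v D (U *v v)) = ((\<lambda>v. transpose U *v v) \<circ> D) \<circ> (\<lambda>v. U *v v)"
    by (simp add: o_def)
  have lin1: "linear ((\<lambda>v. transpose U *v v) \<circ> D)"
    by (intro linear_compose linD matrix_vector_mul_linear)
  have m1: "matrix (((\<lambda>v. transpose U *v v) \<circ> D) \<circ> (\<lambda>v. U *v v)) = matrix ((\<lambda>v. transpose U *v v) \<circ> D) ** U"
    by (simp only: matrix_compose[OF matrix_vector_mul_linear lin1] matrix_of_matrix_vector_mul)
  have m2: "matrix ((\<lambda>v. transpose U *v v) \<circ> D) = transpose U ** matrix D"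
    by (simp only: matrix_compose[OF linD matrix_vector_mul_linear] matrix_of_matrix_vector_mul)
  show ?thesis
    unfolding hess_def fd fd2 eq m1 m2 ..
qed



lemma exp_diff: "exp differentiable (at (t::real))"
  using DERIV_exp[of t] by (auto simp: differentiable_def has_field_derivative_def)

lemma inner_diff: "(\<lambda>y. ((L1::real^'n^'n) *v y + mu1) \<bullet> (L1 *v y + mu1)) differentiable (at x)"
proof -
  have a: "(\<lambda>y. L1 *v y + mu1) differentiable (at x)"
    by (intro differentiable_add bounded_linear_imp_differentiable matrix_vector_mul_bounded_linear differentiable_const)
  then show ?thesis
    using differentiable_inner[OF a a] by simp
qed

lemma "((\<lambda>y. g1 (L1 *v y + mu1) * c * exp (1/2*(y \<bullet> y) - 1/2*((L1 *v y + mu1) \<bullet> (L1 *v y + mu1)))) differentiable (at x))"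
  if "g1 differentiable (at (L1 *v x + mu1))" for g1 :: "real^'n \<Rightarrow> real" and L1 :: "real^'n^'n"
proof -
  have "(\<lambda>y. L1 *v y + mu1) differentiable (at x)"
    by (intro differentiable_add bounded_linear_imp_differentiable matrix_vector_mul_bounded_linear differentiable_const)
  then have 1: "(\<lambda>y. g1 (L1 *v y + mu1)) differentiable (at x)"
    using that differentiable_chain_at[of "\<lambda>y. L1 *v y + mu1" x g1] by (simp add: o_def)
  have 2: "(\<lambda>y. 1/2*(y \<bullet> y) - 1/2*((L1 *v y + mu1) \<bullet> (L1 *v y + mu1))) differentiable (at x)"
    using inner_diff[of "mat 1" 0 x] inner_diff[of L1 mu1 x]
    by (intro differentiable_diff differentiable_mult differentiable_const) auto
  have 3: "(\<lambda>y. exp (1/2*(y \<bullet> y) - 1/2*((L1 *v y + mu1) \<bullet> (L1 *v y + mu1)))) differentiable (at x)"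
    by (rule differentiable_compose[OF exp_diff 2])
  show ?thesis
    by (intro differentiable_mult 1 3 differentiable_const)
qed



lemma orth_inner:
  fixes V :: "real^'n^'n"
  assumes "orthogonal_matrix V"
  shows "(V *v x) \<bullet> (V *v y) = x \<bullet> y"
proof -
  have "orthogonal_transformation (\<lambda>x. V *v x)"
    unfolding orthogonal_transformation_matrix matrix_of_matrix_vector_mul
    using assms matrix_vector_mul_linear[of V] by blast
  then show ?thesis unfolding orthogonal_transformation_def by blast
qed

lemma snd_orth: "orthogonal_matrix V \<Longrightarrow> std_normal_density (V *v z) = std_normal_density z"
  by (simp add: std_normal_density_def orth_inner)

lemma grad_info_conj:
  fixes V :: "real^('n::{finite,wellorder})^('n::{finite,wellorder})"
  assumes V: "orthogonal_matrix V"
    and fin1: "grad_info_finite h1" and fin2: "grad_info_finite h2"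
    and h2: "h2 = (\<lambda>z. h1 (V *v z))"
    and ae: "AE z in lborel. h1 differentiable (at (V *v z))"
  shows "grad_info_matrix h2 = transpose V ** grad_info_matrix h1 ** V"
proof -
  define f where "f k l w = grad h1 w $ k * grad h1 w $ l * std_normal_density w" for k l w
  have int1: "integrable lborel (f k l)" for k l
    using fin1 unfolding grad_info_finite_def f_def by blast
  have meas1: "f k l \<in> borel_measurable borel" for k l
    using borel_measurable_integrable[OF int1[of k l]] by simp
  have dist: "distr lborel borel (\<lambda>x. V *v x) = lborel" by (rule distr_orth[OF V])
  have mV: "(\<lambda>x. V *v x) \<in> measurable lborel borel" using mv_borel[of V] by simp
  have intV: "integrable lborel (\<lambda>z. f k l (V *v z))" for k l
  proof -
    have "integrable (distr lborel borel (\<lambda>x. V *v x)) (f k l)" using int1 dist by simp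
    then show ?thesis using integrable_distr_eq[OF mV meas1] by simp
  qed
  have intEq: "(\<integral>z. f k l (V *v z) \<partial>lborel) = (\<integral>w. f k l w \<partial>lborel)" for k l
  proof -
    have "(\<integral>z. f k l (V *v z) \<partial>lborel) = integral\<^sup>L (distr lborel borel (\<lambda>x. V *v x)) (f k l)"
      using integral_distr[OF mV meas1] by simp
    then show ?thesis using dist by simp
  qed
  show ?thesis
  proof (rule vec_eq_iff[THEN iffD2], rule allI, rule vec_eq_iff[THEN iffD2], rule allI)
    fix i j
    have pw: "AE z in lborel. grad h2 z $ i * grad h2 z $ j * std_normal_density z
        = (\<Sum>k\<in>UNIV. \<Sum>l\<in>UNIV. V $ k $ i * V $ l $ j * f k l (V *v z))"
      using ae
    proof (rule AE_mp, intro AE_I2 impI)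
      fix z assume d: "h1 differentiable (at (V *v z))"
      have g: "grad h2 z = transpose V *v grad h1 (V *v z)"
        unfolding h2 by (rule grad_compose_linear[OF d])
      have c: "(transpose V *v x) $ m = (\<Sum>k\<in>UNIV. V $ k $ m * x $ k)" for x :: "real^('n::{finite,wellorder})" and m
        by (simp add: matrix_vector_mult_def transpose_def)
      show "grad h2 z $ i * grad h2 z $ j * std_normal_density z
        = (\<Sum>k\<in>UNIV. \<Sum>l\<in>UNIV. V $ k $ i * V $ l $ j * f k l (V *v z))"
        unfolding g c f_def snd_orth[OF V] sum_product sum_distrib_right
        by (intro sum.cong refl) (simp add: sum_distrib_left mult_ac)
    qed
    have m2: "(\<lambda>z. grad h2 z $ i * grad h2 z $ j * std_normal_density z) \<in> borel_measurable lborel"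
      using fin2 unfolding grad_info_finite_def by blast
    have m3: "(\<lambda>z. \<Sum>k\<in>UNIV. \<Sum>l\<in>UNIV. V $ k $ i * V $ l $ j * f k l (V *v z)) \<in> borel_measurable lborel"
      using intV by (intro borel_measurable_sum borel_measurable_times borel_measurable_const) auto
    have "grad_info_matrix h2 $ i $ j = (\<integral>z. grad h2 z $ i * grad h2 z $ j * std_normal_density z \<partial>lborel)"
      by (simp add: grad_info_matrix_def)
    also have "\<dots> = (\<integral>z. (\<Sum>k\<in>UNIV. \<Sum>l\<in>UNIV. V $ k $ i * V $ l $ j * f k l (V *v z)) \<partial>lborel)"
      by (rule integral_cong_AE[OF m2 m3 pw])
    also have "\<dots> = (\<Sum>k\<in>UNIV. \<Sum>l\<in>UNIV. V $ k $ i * V $ l $ j * (\<integral>z. f k l (V *v z) \<partial>lborel))"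
      using intV by (simp add: integral_sum integrable_sum)
    also have "\<dots> = (\<Sum>k\<in>UNIV. \<Sum>l\<in>UNIV. V $ k $ i * V $ l $ j * grad_info_matrix h1 $ k $ l)"
      unfolding intEq by (simp add: grad_info_matrix_def f_def[abs_def])
    also have "\<dots> = (\<Sum>l\<in>UNIV. \<Sum>k\<in>UNIV. V $ k $ i * V $ l $ j * grad_info_matrix h1 $ k $ l)"
      by (rule sum.swap)
    also have "\<dots> = (transpose V ** grad_info_matrix h1 ** V) $ i $ j"
      by (simp add: matrix_matrix_mult_def transpose_def sum_distrib_right sum_distrib_left mult_ac)
    finally show "grad_info_matrix h2 $ i $ j = (transpose V ** grad_info_matrix h1 ** V) $ i $ j" .
  qed
qed




lemma gI_diff:
  fixes g :: "real^'n \<Rightarrow> real" and L :: "real^'n^'n"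
  assumes "g differentiable (at (L *v x + mu))"
  shows "gI g mu L differentiable (at x)"
proof -
  have "(\<lambda>y. L *v y + mu) differentiable (at x)"
    by (intro differentiable_add bounded_linear_imp_differentiable matrix_vector_mul_bounded_linear differentiable_const)
  then have 1: "(\<lambda>y. g (L *v y + mu)) differentiable (at x)"
    using assms differentiable_chain_at[of "\<lambda>y. L *v y + mu" x g] by (simp add: o_def)
  have 2: "(\<lambda>y. 1/2*(y \<bullet> y) - 1/2*((L *v y + mu) \<bullet> (L *v y + mu))) differentiable (at x)"
    using inner_diff[of "mat 1" 0 x] inner_diff[of L mu x]
    by (intro differentiable_diff differentiable_mult differentiable_const) auto
  have 3: "(\<lambda>y. exp (1/2*(y \<bullet> y) - 1/2*((L *v y + mu) \<bullet> (L *v y + mu)))) differentiable (at x)"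
    by (rule differentiable_compose[OF exp_diff 2])
  have "(\<lambda>y. g (L *v y + mu) * sqrt (det (Gamma_star g mu)) *
      exp (1/2 * (y \<bullet> y) - 1/2 * ((L *v y + mu) \<bullet> (L *v y + mu)))) differentiable (at x)"
    by (intro differentiable_mult 1 3 differentiable_const)
  then show ?thesis unfolding gI_def[abs_def] .
qed

lemma inv_conj:
  fixes U M :: "real^'n^'n"
  assumes U: "orthogonal_matrix U" and M: "invertible M"
  shows "matrix_inv (transpose U ** M ** U) = transpose U ** matrix_inv M ** U"
proof (rule matrix_inv_eq)
  have UU: "transpose U ** U = mat 1" "U ** transpose U = mat 1"
    using U by (auto simp: orthogonal_matrix_def)
  note MM = matrix_inv_works[OF M]
  have "(transpose U ** M ** U) ** (transpose U ** matrix_inv M ** U)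
      = transpose U ** M ** (U ** transpose U) ** matrix_inv M ** U"
    by (simp only: matrix_mul_assoc)
  also have "\<dots> = transpose U ** (M ** matrix_inv M) ** U"
    by (simp only: UU matrix_mul_rid matrix_mul_assoc)
  also have "\<dots> = mat 1" by (simp only: MM matrix_mul_rid UU)
  finally show "(transpose U ** M ** U) ** (transpose U ** matrix_inv M ** U) = mat 1" .
  have "(transpose U ** matrix_inv M ** U) ** (transpose U ** M ** U)
      = transpose U ** matrix_inv M ** (U ** transpose U) ** M ** U"
    by (simp only: matrix_mul_assoc)
  also have "\<dots> = transpose U ** (matrix_inv M ** M) ** U"
    by (simp only: UU matrix_mul_rid matrix_mul_assoc)
  also have "\<dots> = mat 1" by (simp only: MM matrix_mul_rid UU)
  finally show "(transpose U ** matrix_inv M ** U) ** (transpose U ** M ** U) = mat 1" .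
qed

lemma column_mult: "column i ((A::real^'n^'n) ** Q) = A *v column i Q"
  by (simp add: column_def matrix_matrix_mult_def matrix_vector_mult_def vec_eq_iff)

lemma active_subspace_mult:
  fixes A Q :: "real^('n::{finite,wellorder})^('n::{finite,wellorder})"
  shows "active_subspace (A ** Q) r = (\<lambda>x. A *v x) ` active_subspace Q r"
proof -
  have "{column i (A ** Q) | i. card {j. j < i} < r} = (\<lambda>x. A *v x) ` {column i Q | i. card {j. j < i} < r}"
    unfolding column_mult by blast
  then show ?thesis
    unfolding active_subspace_def
    by (simp add: real_vector.linear_span_image[OF matrix_vector_mul_linear])
qed




lemma matrix_diff_ldistrib: "(A::real^'n^'m) ** (B - C) = A ** B - A ** C"
  by (simp add: vec_eq_iff matrix_matrix_mult_def sum_subtractf algebra_simps)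

lemma matrix_diff_rdistrib: "((B::real^'n^'m) - C) ** A = B ** A - C ** A"
  by (simp add: vec_eq_iff matrix_matrix_mult_def sum_subtractf algebra_simps)

theorem theorem3p6:
  fixes g1 :: "real^('d::{finite,wellorder}) \<Rightarrow> real"
    and U L1 L2 :: "real^('d::{finite,wellorder})^('d::{finite,wellorder})"
    and mu1 mu2 :: "real^('d::{finite,wellorder})"
  defines "g2 \<equiv> (\<lambda>z. g1 (U *v z))"
  assumes nonneg: "\<forall>z. g1 z \<ge> 0"
    and ae_diff: "AE z in lborel. g1 differentiable (at z)"
    and orthU: "orthogonal_matrix U"
    and drift1: "opt_drift g1 mu1" "\<forall>mu. opt_drift g1 mu \<longrightarrow> mu = mu1"
    and drift2: "opt_drift g2 mu2" "\<forall>mu. opt_drift g2 mu \<longrightarrow> mu = mu2"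
    and wd1: "laplace_IS_welldef g1 mu1"
    and wd2: "laplace_IS_welldef g2 mu2"
    and L1: "L1 ** transpose L1 = Gamma_star g1 mu1"
    and L2: "L2 ** transpose L2 = Gamma_star g2 mu2"
    and fin1: "grad_info_finite (gI g1 mu1 L1)"
    and fin2: "grad_info_finite (gI g2 mu2 L2)"
  shows "\<exists>V. orthogonal_matrix V \<and>
           (\<forall>z. gI g2 mu2 L2 z = gI g1 mu1 L1 (V *v z)) \<and>
           (\<forall>Q lam. eigen_decomp (grad_info_matrix (gI g1 mu1 L1)) Q lam \<longrightarrow>
              eigen_decomp (grad_info_matrix (gI g2 mu2 L2)) (transpose V ** Q) lam \<and>
              (\<forall>r. active_subspace (transpose V ** Q) r = (\<lambda>x. transpose V *v x) ` active_subspace Q r) \<and>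
              (\<forall>z. gI g1 mu1 L1 (Q *v z) = gI g2 mu2 L2 ((transpose V ** Q) *v z))) \<and>
           (\<forall>Q lam. eigen_decomp (grad_info_matrix (gI g2 mu2 L2)) Q lam \<longrightarrow>
              eigen_decomp (grad_info_matrix (gI g1 mu1 L1)) (V ** Q) lam \<and>
              (\<forall>r. active_subspace (V ** Q) r = (\<lambda>x. V *v x) ` active_subspace Q r) \<and>
              (\<forall>z. gI g1 mu1 L1 ((V ** Q) *v z) = gI g2 mu2 L2 (Q *v z)))"
proof -
  have UU: "transpose U ** U = mat 1" "U ** transpose U = mat 1"
    using orthU by (auto simp: orthogonal_matrix_def)
  have UUv: "U *v (transpose U *v x) = x" for x
    by (simp only: matrix_vector_mul_assoc UU matrix_vector_mul_lid)
  have od: "opt_drift g2 (transpose U *v mu1)"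
  proof -
    have a: "g1 mu1 \<noteq> 0" "g1 differentiable (at mu1)" "(1 / g1 mu1) *\<^sub>R grad g1 mu1 = mu1"
      using drift1(1) by (auto simp: opt_drift_def)
    have e: "g2 (transpose U *v mu1) = g1 mu1" unfolding g2_def UUv ..
    have a2: "g1 differentiable (at (U *v (transpose U *v mu1)))" unfolding UUv by (rule a(2))
    have d: "g2 differentiable (at (transpose U *v mu1))"
      unfolding g2_def by (rule differentiable_compose_linear[OF a2])
    have gr: "grad g2 (transpose U *v mu1) = transpose U *v grad g1 mu1"
      unfolding g2_def using grad_compose_linear[OF a2] unfolding UUv .
    have "(1 / g2 (transpose U *v mu1)) *\<^sub>R grad g2 (transpose U *v mu1)
        = transpose U *v ((1 / g1 mu1) *\<^sub>R grad g1 mu1)"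
      unfolding e gr by (simp only: matrix_vector_mult_scaleR)
    also have "\<dots> = transpose U *v mu1" unfolding a(3) ..
    finally show ?thesis using a(1) d unfolding opt_drift_def e by blast
  qed
  have mu2: "mu2 = transpose U *v mu1" using drift2(2) od by blast
  have Umu2: "U *v mu2 = mu1" unfolding mu2 UUv ..
  have tw1: "twice_differentiable_at (\<lambda>z. ln (g1 z)) (U *v mu2)"
    using wd1 unfolding Umu2 laplace_IS_welldef_def by blast
  define H1 where "H1 = hess (\<lambda>z. ln (g1 z)) mu1"
  define M1 where "M1 = mat 1 - H1"
  define G1 where "G1 = Gamma_star g1 mu1"
  have M1inv: "invertible M1" using wd1 unfolding laplace_IS_welldef_def M1_def H1_def by blast
  have G1M1: "G1 = matrix_inv M1" unfolding G1_def Gamma_star_def M1_def H1_def ..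
  have H2: "hess (\<lambda>z. ln (g2 z)) mu2 = transpose U ** H1 ** U"
    using hess_compose_linear[OF tw1] unfolding g2_def Umu2 H1_def .
  have M2: "mat 1 - hess (\<lambda>z. ln (g2 z)) mu2 = transpose U ** M1 ** U"
    unfolding H2 M1_def matrix_diff_ldistrib matrix_diff_rdistrib matrix_mul_rid UU ..
  have G2: "Gamma_star g2 mu2 = transpose U ** G1 ** U"
    unfolding Gamma_star_def M2 G1M1 by (rule inv_conj[OF orthU M1inv])
  have detU: "det (transpose U) * det U = 1"
    using arg_cong[OF UU(1), of det] by (simp add: det_mul)
  have detG: "det (Gamma_star g2 mu2) = det G1"
  proof -
    have "det (Gamma_star g2 mu2) = det G1 * (det (transpose U) * det U)"
      unfolding G2 det_mul by (simp add: mult_ac)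
    then show ?thesis using detU by simp
  qed
  have G1inv: "invertible G1"
    using matrix_inv_works[OF M1inv] unfolding G1M1 invertible_def by blast
  have L1inv: "invertible L1"
  proof -
    have "det (L1 ** transpose L1) \<noteq> 0" using G1inv L1 unfolding G1_def by (simp add: invertible_det_nz)
    then show ?thesis by (simp add: invertible_det_nz det_mul)
  qed
  define Li where "Li = matrix_inv L1"
  have LL: "L1 ** Li = mat 1" "Li ** L1 = mat 1" using matrix_inv_works[OF L1inv] unfolding Li_def by auto
  define V where "V = Li ** U ** L2"
  have L1V: "L1 ** V = U ** L2"
    unfolding V_def by (simp only: matrix_mul_assoc LL matrix_mul_lid)
  have VVt: "V ** transpose V = mat 1"
  proof -
    have tLi: "transpose L1 ** transpose Li = mat 1"
      using arg_cong[OF LL(2), of transpose] by (simp add: matrix_transpose_mul)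
    have "V ** transpose V = Li ** U ** (L2 ** transpose L2) ** transpose U ** transpose Li"
      unfolding V_def by (simp only: matrix_transpose_mul matrix_mul_assoc)
    also have "\<dots> = Li ** (U ** transpose U) ** G1 ** (U ** transpose U) ** transpose Li"
      unfolding L2 G2 by (simp only: matrix_mul_assoc)
    also have "\<dots> = Li ** (L1 ** transpose L1) ** transpose Li"
      unfolding UU G1_def L1[symmetric] by (simp only: matrix_mul_rid)
    also have "\<dots> = (Li ** L1) ** (transpose L1 ** transpose Li)"
      by (simp only: matrix_mul_assoc)
    also have "\<dots> = mat 1" unfolding LL tLi by simp
    finally show ?thesis .
  qed
  have VtV: "transpose V ** V = mat 1" using VVt matrix_left_right_inverse by blast
  have orthV: "orthogonal_matrix V" using VVt VtV unfolding orthogonal_matrix_def by blast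
  have eqI: "gI g2 mu2 L2 z = gI g1 mu1 L1 (V *v z)" for z
  proof -
    have 1: "L1 *v (V *v z) + mu1 = U *v (L2 *v z + mu2)"
      by (simp only: matrix_vector_mul_assoc L1V matrix_vector_right_distrib Umu2)
    have 2: "(V *v z) \<bullet> (V *v z) = z \<bullet> z" by (rule orth_inner[OF orthV])
    have 3: "(U *v (L2 *v z + mu2)) \<bullet> (U *v (L2 *v z + mu2)) = (L2 *v z + mu2) \<bullet> (L2 *v z + mu2)"
      by (rule orth_inner[OF orthU])
    show ?thesis unfolding gI_def 1 2 3 detG G1_def by (simp only: g2_def)
  qed
  have h2eq: "gI g2 mu2 L2 = (\<lambda>z. gI g1 mu1 L1 (V *v z))" using eqI by blast
  have LVinv: "invertible (L1 ** V)"
  proof (rule invertible_mult[OF L1inv])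
    show "invertible V" unfolding invertible_def using VVt VtV by blast
  qed
  have ae: "AE z in lborel. gI g1 mu1 L1 differentiable (at (V *v z))"
  proof -
    have "AE z in lborel. g1 differentiable (at ((L1 ** V) *v z + mu1))"
      by (rule AE_affine[OF LVinv ae_diff])
    then show ?thesis
      by (rule AE_mp) (auto intro!: AE_I2 gI_diff simp: matrix_vector_mul_assoc)
  qed
  have C: "grad_info_matrix (gI g2 mu2 L2) = transpose V ** grad_info_matrix (gI g1 mu1 L1) ** V"
    by (rule grad_info_conj[OF orthV fin1 fin2 h2eq ae])
  define C1 where "C1 = grad_info_matrix (gI g1 mu1 L1)"
  have C': "grad_info_matrix (gI g1 mu1 L1) = V ** grad_info_matrix (gI g2 mu2 L2) ** transpose V"
  proof -
    have "V ** grad_info_matrix (gI g2 mu2 L2) ** transpose V = (V ** transpose V) ** C1 ** (V ** transpose V)"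
      unfolding C C1_def by (simp only: matrix_mul_assoc)
    then show ?thesis unfolding VVt C1_def by simp
  qed
  show ?thesis
  proof (intro exI[of _ V] conjI allI impI)
    show "orthogonal_matrix V" by (rule orthV)
    show "gI g2 mu2 L2 z = gI g1 mu1 L1 (V *v z)" for z by (rule eqI)
  next
    fix Q lam assume E: "eigen_decomp (grad_info_matrix (gI g1 mu1 L1)) Q lam"
    then have oQ: "orthogonal_matrix Q"
      and CQ: "grad_info_matrix (gI g1 mu1 L1) = Q ** (\<chi> i j. if i = j then lam i else 0) ** transpose Q"
      and mono: "\<forall>i j. i \<le> j \<longrightarrow> lam j \<le> lam i"
      unfolding eigen_decomp_def by auto
    show "eigen_decomp (grad_info_matrix (gI g2 mu2 L2)) (transpose V ** Q) lam"
      unfolding eigen_decomp_def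
    proof (intro conjI)
      show "orthogonal_matrix (transpose V ** Q)" using orthV oQ by (simp add: orthogonal_matrix_mul)
      show "grad_info_matrix (gI g2 mu2 L2) = transpose V ** Q ** (\<chi> i j. if i = j then lam i else 0) ** transpose (transpose V ** Q)"
        unfolding C CQ by (simp only: matrix_transpose_mul transpose_transpose matrix_mul_assoc)
    qed (rule mono)
    show "active_subspace (transpose V ** Q) r = (\<lambda>x. transpose V *v x) ` active_subspace Q r" for r
      by (rule active_subspace_mult)
    show "gI g1 mu1 L1 (Q *v z) = gI g2 mu2 L2 ((transpose V ** Q) *v z)" for z
      unfolding eqI by (simp only: matrix_vector_mul_assoc matrix_mul_assoc VVt matrix_mul_lid)
  next
    fix Q lam assume E: "eigen_decomp (grad_info_matrix (gI g2 mu2 L2)) Q lam"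
    then have oQ: "orthogonal_matrix Q"
      and CQ: "grad_info_matrix (gI g2 mu2 L2) = Q ** (\<chi> i j. if i = j then lam i else 0) ** transpose Q"
      and mono: "\<forall>i j. i \<le> j \<longrightarrow> lam j \<le> lam i"
      unfolding eigen_decomp_def by auto
    show "eigen_decomp (grad_info_matrix (gI g1 mu1 L1)) (V ** Q) lam"
      unfolding eigen_decomp_def
    proof (intro conjI)
      show "orthogonal_matrix (V ** Q)" using orthV oQ by (simp add: orthogonal_matrix_mul)
      show "grad_info_matrix (gI g1 mu1 L1) = V ** Q ** (\<chi> i j. if i = j then lam i else 0) ** transpose (V ** Q)"
        unfolding C' CQ by (simp only: matrix_transpose_mul matrix_mul_assoc)
    qed (rule mono)
    show "active_subspace (V ** Q) r = (\<lambda>x. V *v x) ` active_subspace Q r" for r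
      by (rule active_subspace_mult)
    show "gI g1 mu1 L1 ((V ** Q) *v z) = gI g2 mu2 L2 (Q *v z)" for z
      unfolding eqI by (simp only: matrix_vector_mul_assoc)
  qed
qed


end
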